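(* Let $\Gamma=\{0=\rho_1<\rho_2<\cdots\}$ be an Arf numerical semigroup and $d_i=\rho_{i+1}-\rho_i$ for $i\ge1$. Let $j\ge2$ and let $x$ be an integer with $d_j\le x<d_{j-1}$. Then $\mathrm{Ap}(\Gamma,-d_j)\subseteq\mathrm{Ap}(\Gamma,-x)$. In particular $|\mathrm{Ap}(\Gamma,x)|\ge|\mathrm{Ap}(\Gamma,d_j)|$.
   Context: A numerical semigroup is a subset of $\mathbb N$ containing $0$, closed under addition, with finite complement; its elements listed increasingly are $\rho_1<\rho_2<\cdots$. $\Gamma$ is Arf if $\rho_i+\rho_j-\rho_k\in\Gamma$ for all $i\ge j\ge k$. For $x\in\mathbb Z$, $\mathrm{Ap}(\Gamma,x)=\{s\in\Gamma: s-x\notin\Gamma\}$. *)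

theory Defs
  imports Main "HOL-Library.Infinite_Set"
begin

definition numerical_semigroup :: "nat set \<Rightarrow> bool" where
  "numerical_semigroup G \<longleftrightarrow> 0 \<in> G \<and> (\<forall>a\<in>G. \<forall>b\<in>G. a + b \<in> G) \<and> finite (UNIV - G)"

text \<open>rho G i is the i-th smallest element of G, 1-indexed (rho G 1 = 0).\<close>
definition rho :: "nat set \<Rightarrow> nat \<Rightarrow> nat" where
  "rho G i = enumerate G (i - 1)"

definition gapd :: "nat set \<Rightarrow> nat \<Rightarrow> nat" where
  "gapd G i = rho G (i + 1) - rho G i"

definition Arf :: "nat set \<Rightarrow> bool" where
  "Arf G \<longleftrightarrow> numerical_semigroup G \<and>
     (\<forall>i j k. 1 \<le> k \<and> k \<le> j \<and> j \<le> i \<longrightarrow> rho G i + rho G j - rho G k \<in> G)"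

definition Ap :: "nat set \<Rightarrow> int \<Rightarrow> nat set" where
  "Ap G x = {s \<in> G. int s - x \<notin> int ` G}"

end

theory Submission
  imports Defs
begin

lemma ns_infinite: "numerical_semigroup G \<Longrightarrow> infinite G"
proof
  assume "numerical_semigroup G" "finite G"
  then have "finite (UNIV - G)" unfolding numerical_semigroup_def by blast
  with \<open>finite G\<close> have "finite (G \<union> (UNIV - G))" by blast
  then show False by simp
qed

lemma ns_cond: "numerical_semigroup G \<Longrightarrow> \<exists>c. \<forall>t\<ge>c. t \<in> G"
proof -
  assume "numerical_semigroup G"
  then have f: "finite (UNIV - G)" unfolding numerical_semigroup_def by blast
  obtain c where "\<forall>t\<in>UNIV - G. t < c"
    using finite_nat_bounded[OF f] by (auto simp: lessThan_def)
  then show ?thesis by (metis DiffI UNIV_I not_le)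
qed

lemma enum_next:
  fixes G :: "nat set"
  assumes inf: "infinite G" and g: "g \<in> G" and lt: "enumerate G n < g"
  shows "enumerate G (Suc n) \<le> g"
proof -
  obtain p where p: "enumerate G p = g" using enumerate_Ex[OF inf g] by blast
  with lt inf have "n < p" using enumerate_mono_iff by metis
  then have "Suc n \<le> p" by simp
  with inf p show ?thesis using enumerate_mono_le_iff by metis
qed

lemma intimg_add: "(int s - - int n \<in> int ` G) = (s + n \<in> G)"
proof -
  have e: "(int s - - int n = int x) = (x = s + n)" for x by linarith
  show ?thesis
  proof
    assume "int s - - int n \<in> int ` G"
    then obtain x where "x \<in> G" "int s - - int n = int x" by blast
    then have "x = s + n" using e by blast
    with \<open>x \<in> G\<close> show "s + n \<in> G" by simp
  next
    assume "s + n \<in> G"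
    then show "int s - - int n \<in> int ` G" using e[of "s+n"] by blast
  qed
qed
lemma intimg_sub: "(int s - int n \<in> int ` G) = (n \<le> s \<and> s - n \<in> G)"
proof
  assume "int s - int n \<in> int ` G"
  then obtain g where g: "g \<in> G" "int s - int n = int g" by auto
  then have "s = g + n" by linarith
  then have "n \<le> s" "s - n = g" by simp_all
  then show "n \<le> s \<and> s - n \<in> G" using g by simp
next
  assume a: "n \<le> s \<and> s - n \<in> G"
  then have "int s - int n = int (s - n)" by auto
  then show "int s - int n \<in> int ` G" using a by blast
qed
lemma Ap_pos: "Ap G (int n) = {s\<in>G. \<not> (n \<le> s \<and> s - n \<in> G)}"
  unfolding Ap_def intimg_sub ..

lemma Ap_neg: "Ap G (- int n) = {s\<in>G. s + n \<notin> G}"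
  unfolding Ap_def intimg_add ..

lemma ap_card:
  fixes G :: "nat set"
  assumes "numerical_semigroup G"
  shows "card (Ap G (int n)) = card (Ap G (- int n)) + n"
proof -
  obtain c where c: "\<forall>t\<ge>c. t \<in> G" using ns_cond[OF assms] by blast
  define M where "M = c + n"
  define A where "A = G \<inter> {..<M}"
  define B where "B = (\<lambda>g. g + n) ` (G \<inter> {..<c})"
  have fA: "finite A" "finite B" unfolding A_def B_def by auto
  have e1: "Ap G (int n) = A - B"
  proof
    show "Ap G (int n) \<subseteq> A - B"
    proof
      fix s assume s: "s \<in> Ap G (int n)"
      then have sG: "s \<in> G" and ns: "\<not> (n \<le> s \<and> s - n \<in> G)" unfolding Ap_pos by auto
      have "s < M"
      proof (rule ccontr)
        assume "\<not> s < M"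
        then have "n \<le> s" "c \<le> s - n" using M_def by auto
        then show False using ns c by blast
      qed
      moreover have "s \<notin> B"
      proof
        assume "s \<in> B"
        then obtain g where "g \<in> G" "s = g + n" unfolding B_def by auto
        with ns show False by simp
      qed
      ultimately show "s \<in> A - B" using sG A_def by auto
    qed
  next
    show "A - B \<subseteq> Ap G (int n)"
    proof
      fix s assume s: "s \<in> A - B"
      then have sG: "s \<in> G" "s < M" "s \<notin> B" unfolding A_def by auto
      have "\<not> (n \<le> s \<and> s - n \<in> G)"
      proof
        assume a: "n \<le> s \<and> s - n \<in> G"
        then have "s = (s - n) + n" by simp
        moreover have "s - n < c" using sG(2) a M_def by linarith
        ultimately have "s \<in> B" using a unfolding B_def by blast
        with sG show False by simp
      qed
      with sG show "s \<in> Ap G (int n)" unfolding Ap_pos by auto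
    qed
  qed
  have e2: "(\<lambda>s. s + n) ` Ap G (- int n) = B - A"
  proof
    show "(\<lambda>s. s + n) ` Ap G (- int n) \<subseteq> B - A"
    proof
      fix t assume "t \<in> (\<lambda>s. s + n) ` Ap G (- int n)"
      then obtain s where s: "s \<in> G" "s + n \<notin> G" "t = s + n"
        unfolding Ap_neg by auto
      then have "s + n < c" using c by (meson not_le)
      then show "t \<in> B - A" using s unfolding A_def B_def by auto
    qed
  next
    show "B - A \<subseteq> (\<lambda>s. s + n) ` Ap G (- int n)"
    proof
      fix t assume t: "t \<in> B - A"
      then obtain g where g: "g \<in> G" "g < c" "t = g + n" unfolding B_def by auto
      with t have "t \<notin> G" unfolding A_def M_def by auto
      with g show "t \<in> (\<lambda>s. s + n) ` Ap G (- int n)" unfolding Ap_neg by auto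
    qed
  qed
  have injn: "inj_on (\<lambda>s::nat. s + n) X" for X by (auto simp: inj_on_def)
  have c2: "card (Ap G (- int n)) = card (B - A)"
    using card_image[OF injn, of "Ap G (- int n)"] e2 by simp
  have cB: "card B = card (G \<inter> {..<c})" unfolding B_def using card_image[OF injn] by blast
  have Asplit: "A = (G \<inter> {..<c}) \<union> {c..<M}"
  proof
    show "A \<subseteq> (G \<inter> {..<c}) \<union> {c..<M}" unfolding A_def by auto
    show "(G \<inter> {..<c}) \<union> {c..<M} \<subseteq> A" unfolding A_def M_def using c by auto
  qed
  have cA: "card A = card (G \<inter> {..<c}) + n"
    unfolding Asplit M_def by (subst card_Un_disjoint) auto
  have "card (A - B) + card (A \<inter> B) = card A"
    using fA card_Int_Diff[of A B] by simp
  moreover have "card (B - A) + card (A \<inter> B) = card B"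
    using fA card_Int_Diff[of B A] by (simp add: Int_commute)
  moreover have "card (Ap G (int n)) = card (A - B)" using e1 by simp
  ultimately show ?thesis using c2 cA cB by linarith
qed

theorem lemma3p5:
  fixes G :: "nat set" and j :: nat and x :: int
  assumes "Arf G"
    and "j \<ge> 2"
    and "int (gapd G j) \<le> x" and "x < int (gapd G (j - 1))"
  shows "Ap G (- int (gapd G j)) \<subseteq> Ap G (- x)
       \<and> card (Ap G x) \<ge> card (Ap G (int (gapd G j)))"
proof -
  define e where "e = enumerate G"
  have ns: "numerical_semigroup G" using assms(1) unfolding Arf_def by blast
  have inf: "infinite G" using ns_infinite[OF ns] .
  have arf: "e a + e b - e c' \<in> G" if "c' \<le> b" "b \<le> a" for a b c'
  proof -
    have "rho G (Suc a) + rho G (Suc b) - rho G (Suc c') \<in> G"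
      using assms(1) that unfolding Arf_def by auto
    then show ?thesis unfolding rho_def e_def by simp
  qed
  define D where "D m = e (Suc m) - e m" for m
  have emono: "e a < e b \<longleftrightarrow> a < b" "e a \<le> e b \<longleftrightarrow> a \<le> b" for a b
    using inf unfolding e_def by auto
  have eG: "e a \<in> G" for a using enumerate_in_set[OF inf] e_def by simp
  have Dpos: "D m > 0" for m using emono[of m "Suc m"] D_def by simp
  have Dstep: "D (Suc m) \<le> D m" for m
  proof -
    have "e (Suc m) + e (Suc m) - e m \<in> G" using arf by simp
    moreover have "e (Suc m) < e (Suc m) + e (Suc m) - e m" using emono[of m "Suc m"] by simp
    ultimately have "e (Suc (Suc m)) \<le> e (Suc m) + e (Suc m) - e m"
      using enum_next[OF inf] e_def by blast
    then show ?thesis unfolding D_def using emono[of m "Suc m"] by simp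
  qed
  have Dmono: "q \<le> p \<Longrightarrow> D p \<le> D q" for p q
    using Dstep by (simp add: antimono_iff_le_Suc antimonoD)
  obtain m where m: "j = Suc m" "m \<ge> 1" using assms(2) by (cases j) auto
  have gj: "gapd G j = D m" unfolding gapd_def rho_def D_def e_def m(1) by simp
  have gj1: "gapd G (j - 1) = D (m - 1)"
    unfolding gapd_def rho_def D_def e_def m(1) using m(2) by (simp add: Suc_diff_1)
  define d where "d = D m"
  define n where "n = nat x"
  have xn: "x = int n" using assms(3) n_def by simp
  have dn: "d \<le> n" "n < D (m - 1)" using assms(3,4) gj gj1 xn d_def by auto
  have inc: "Ap G (- int d) \<subseteq> Ap G (- int n)"
  proof
    fix s assume s: "s \<in> Ap G (- int d)"
    then have sG: "s \<in> G" and sd: "s + d \<notin> G" unfolding Ap_neg by auto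
    obtain k where k: "e k = s" using enumerate_Ex[OF inf sG] e_def by blast
    have "s + n \<notin> G"
    proof (cases "k < m")
      case True
      then have "D (m - 1) \<le> D k" using Dmono by simp
      then have "s + n < e (Suc k)" using dn k D_def emono[of k "Suc k"] by simp
      moreover have "s < s + n" using dn Dpos[of m] d_def by simp
      ultimately show ?thesis using enum_next[OF inf, of "s+n" k] k e_def by fastforce
    next
      case False
      then show ?thesis
      proof (cases "k = m")
        case True
        then have "s + d = e (Suc m)" using k d_def D_def emono[of m "Suc m"] by simp
        with sd eG show ?thesis by metis
      next
        case False
        with \<open>\<not> k < m\<close> have "Suc m \<le> k" by simp
        then have "e k + e (Suc m) - e m \<in> G" using arf by simp
        moreover have "e k + e (Suc m) - e m = s + d"
          using k d_def D_def emono[of m "Suc m"] by simp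
        ultimately show ?thesis using sd by simp
      qed
    qed
    with sG show "s \<in> Ap G (- int n)" unfolding Ap_neg by auto
  qed
  have fin: "finite (Ap G (- int n))"
  proof -
    have "card (Ap G (int n)) = card (Ap G (- int n)) + n" using ap_card[OF ns] .
    obtain c where c: "\<forall>t\<ge>c. t \<in> G" using ns_cond[OF ns] by blast
    have "Ap G (- int n) \<subseteq> {..<c}"
    proof
      fix s assume "s \<in> Ap G (- int n)"
      then have "s + n \<notin> G" unfolding Ap_neg by auto
      then show "s \<in> {..<c}" using c by (meson lessThan_iff not_le trans_le_add1)
    qed
    then show ?thesis using finite_subset by blast
  qed
  have "card (Ap G (- int d)) \<le> card (Ap G (- int n))" using card_mono[OF fin inc] .
  then have "card (Ap G (int d)) \<le> card (Ap G (int n))"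
    using ap_card[OF ns, of d] ap_card[OF ns, of n] dn(1) by linarith
  then show ?thesis using inc xn gj d_def by simp
qed

end
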